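(* Let $N\ge 1$ and $1\le K\le N$ be integers, let $\lambda_s>0$, $c>0$, and let $T_{\mathrm D}>c$ be a fixed deadline. Let $T_1,\dots,T_N$ be i.i.d. with CDF $F(t)=1-e^{-\lambda_s(t-c)}$ for $t>c$ (and $0$ for $t\le c$), let $T_N(K)$ be the $K$-th smallest of them, and fix $n\in\{1,\dots,N\}$. Define the events $$\mathcal C_{\mathrm S,1}=\{T_N(K)<T_{\mathrm D}\}\cap\{T_n\le \min\{T_{\mathrm D},T_N(K)\}\},\qquad \mathcal C_{\mathrm F,1}=\{T_N(K)<T_{\mathrm D}\}\cap\{T_n> \min\{T_{\mathrm D},T_N(K)\}\},$$ both assumed to have positive probability. Then $\mathbb E[T_N(K)\mid\mathcal C_{\mathrm S,1}]=\mathbb E[T_N(K)\mid\mathcal C_{\mathrm F,1}]$ and $\mathbb E[T_N(K)^2\mid\mathcal C_{\mathrm S,1}]=\mathbb E[T_N(K)^2\mid\mathcal C_{\mathrm F,1}]$, and these common values equal $$\frac{1}{1-\mathcal Z_K}\sum_{j=0}^{K-1}\frac{B_{K,j}}{\lambda_s U_{K,j}^2}\Big[1+c\lambda_sU_{K,j}-(1+T_{\mathrm D}\lambda_sU_{K,j})V_{K,j}\Big]$$ and $$\frac{1}{1-\mathcal Z_K}\sum_{j=0}^{K-1}\frac{B_{K,j}}{\lambda_s^2 U_{K,j}^3}\Big[(1+c\lambda_sU_{K,j})^2+1-\big((1+T_{\mathrm D}\lambda_sU_{K,j})^2+1\big)V_{K,j}\Big]$$ respectively, where $B_{K,j}=K\binom{N}{K}\binom{K-1}{j}(-1)^j$,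 $U_{K,j}=N-K+1+j$, $V_{K,j}=e^{-\lambda_sU_{K,j}(T_{\mathrm D}-c)}$, and $\mathcal Z_K=\sum_{i=0}^{K-1}B_{K,i}\frac{V_{K,i}}{U_{K,i}}$.
   Context: Model: an access point multicasts a status update to $N$ devices with i.i.d. shifted-exponential delivery times; transmission terminates at $\min\{T_{\mathrm D},T_N(K)\}$. $\mathcal C_{\mathrm S,1}$: device $n$ receives the update and the transmission stops because $K$ devices received it before the deadline; $\mathcal C_{\mathrm F,1}$: device $n$ fails and the transmission stops because $K$ devices received it before the deadline. *)

theory Defs
  imports "HOL-Probability.Probability"
begin

definition shexp_cdf :: "real \<Rightarrow> real \<Rightarrow> real \<Rightarrow> real" where
  "shexp_cdf lam c t = (if t > c then 1 - exp (- lam * (t - c)) else 0)"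

definition kth_smallest :: "nat \<Rightarrow> nat \<Rightarrow> (nat \<Rightarrow> 'a \<Rightarrow> real) \<Rightarrow> 'a \<Rightarrow> real" where
  "kth_smallest N K T w = sort (map (\<lambda>i. T i w) [1..<N+1]) ! (K - 1)"

definition cond_exp_event :: "'a measure \<Rightarrow> ('a \<Rightarrow> real) \<Rightarrow> 'a set \<Rightarrow> real" where
  "cond_exp_event M X A = (set_lebesgue_integral M A X) / measure M A"

definition coefB :: "nat \<Rightarrow> nat \<Rightarrow> nat \<Rightarrow> real" where
  "coefB N K j = real K * real (N choose K) * real ((K - 1) choose j) * (-1) ^ j"

definition coefU :: "nat \<Rightarrow> nat \<Rightarrow> nat \<Rightarrow> real" where
  "coefU N K j = real N - real K + 1 + real j"

definition coefV :: "real \<Rightarrow> real \<Rightarrow> real \<Rightarrow> nat \<Rightarrow> nat \<Rightarrow> nat \<Rightarrow> real" where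
  "coefV lam c TD N K j = exp (- lam * coefU N K j * (TD - c))"

definition coefZ :: "real \<Rightarrow> real \<Rightarrow> real \<Rightarrow> nat \<Rightarrow> nat \<Rightarrow> real" where
  "coefZ lam c TD N K = (\<Sum>i<K. coefB N K i * coefV lam c TD N K i / coefU N K i)"

end

theory Submission
  imports Defs
begin

lemma beta_sum:
  fixes a :: real assumes "a > 0"
  shows "(\<Sum>j\<le>k. real (k choose j) * (-1)^j / (a + real j)) = fact k / pochhammer a (Suc k)"
  using assms
proof (induction k arbitrary: a)
  case 0 then show ?case by simp
next
  case (Suc k)
  have h1: "(\<Sum>j\<le>k. real (k choose j) * (-1)^j / (a + real j)) = fact k / pochhammer a (Suc k)"
    using Suc by blast
  have h2: "(\<Sum>j\<le>k. real (k choose j) * (-1)^j / ((a+1) + real j)) = fact k / pochhammer (a+1) (Suc k)"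
    using Suc.IH[of "a+1"] Suc.prems by simp
  have "(\<Sum>j\<le>Suc k. real (Suc k choose j) * (-1)^j / (a + real j))
      = 1 / a + (\<Sum>j\<le>k. real (Suc k choose Suc j) * (-1)^(Suc j) / (a + real (Suc j)))"
    by (subst sum.atMost_Suc_shift) simp
  also have "\<dots> = 1 / a + (\<Sum>j\<le>k. real (k choose Suc j) * (-1)^(Suc j) / (a + real (Suc j)))
       + (\<Sum>j\<le>k. real (k choose j) * (-1)^(Suc j) / (a + real (Suc j)))"
    by (simp add: sum.distrib[symmetric] del: binomial_Suc_Suc)
       (intro sum.cong refl, simp add: add_divide_distrib distrib_right)
  also have "1 / a + (\<Sum>j\<le>k. real (k choose Suc j) * (-1)^(Suc j) / (a + real (Suc j)))
      = (\<Sum>j\<le>Suc k. real (k choose j) * (-1)^j / (a + real j))"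
    by (subst sum.atMost_Suc_shift) simp
  also have "\<dots> = (\<Sum>j\<le>k. real (k choose j) * (-1)^j / (a + real j))"
    by simp
  also have "(\<Sum>j\<le>k. real (k choose j) * (-1)^(Suc j) / (a + real (Suc j)))
      = - (\<Sum>j\<le>k. real (k choose j) * (-1)^j / ((a+1) + real j))"
    by (simp add: sum_negf[symmetric] add_ac)
  finally have "(\<Sum>j\<le>Suc k. real (Suc k choose j) * (-1)^j / (a + real j))
      = fact k / pochhammer a (Suc k) - fact k / pochhammer (a+1) (Suc k)"
    using h1 h2 by simp
  also have "\<dots> = fact (Suc k) / pochhammer a (Suc (Suc k))"
  proof -
    have p1: "pochhammer a (Suc (Suc k)) = pochhammer a (Suc k) * (a + real (Suc k))"
      by (simp add: pochhammer_Suc)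
    have p2: "pochhammer a (Suc (Suc k)) = a * pochhammer (a+1) (Suc k)"
      by (simp add: pochhammer_rec)
    have pos1: "pochhammer a (Suc k) > 0" using Suc.prems by (intro pochhammer_pos) 
    have pos2: "pochhammer (a+1) (Suc k) > 0" using Suc.prems by (intro pochhammer_pos) simp
    have "fact k / pochhammer a (Suc k) = fact k * (a + real (Suc k)) / pochhammer a (Suc (Suc k))"
      unfolding p1 using Suc.prems
      by (subst nonzero_mult_divide_mult_cancel_right) auto
    moreover have "fact k / pochhammer (a+1) (Suc k) = fact k * a / pochhammer a (Suc (Suc k))"
      unfolding p2 using Suc.prems
      by (subst (2) mult.commute, subst nonzero_mult_divide_mult_cancel_right) auto
    ultimately show ?thesis by (simp add: diff_divide_distrib[symmetric] algebra_simps)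
  qed
  finally show ?case .
qed

lemma sumBU:
  assumes "1 \<le> K" "K \<le> N"
  shows "(\<Sum>j<K. coefB N K j / coefU N K j) = 1"
proof -
  define a where "a = real (N - K + 1)"
  have a: "a > 0" unfolding a_def by simp
  have U: "coefU N K j = a + real j" for j
    using assms unfolding coefU_def a_def by (simp add: of_nat_diff)
  have Kk: "{..<K} = {..K-1}" using assms by auto
  have "(\<Sum>j<K. coefB N K j / coefU N K j)
      = real K * real (N choose K) * (\<Sum>j\<le>K-1. real ((K-1) choose j) * (-1)^j / (a + real j))"
    unfolding Kk U coefB_def by (simp add: sum_distrib_left mult.assoc)
  also have "\<dots> = real K * real (N choose K) * (fact (K-1) / pochhammer a K)"
    using beta_sum[OF a, of "K-1"] assms by simp
  also have "pochhammer a K = fact N / fact (N-K)"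
  proof -
    have "(fact N :: real) = pochhammer 1 ((N-K) + K)" using assms by (simp add: pochhammer_fact)
    also have "\<dots> = pochhammer 1 (N-K) * pochhammer (1 + real (N-K)) K"
      by (rule pochhammer_product')
    also have "1 + real (N-K) = a" unfolding a_def using assms by simp
    finally have "(fact N :: real) = fact (N-K) * pochhammer a K" by (simp add: pochhammer_fact)
    then show ?thesis by (metis fact_nonzero nonzero_mult_div_cancel_left)
  qed
  also have "real K * real (N choose K) * (fact (K-1) / (fact N / fact (N-K))) = 1"
  proof -
    have "real (N choose K) = fact N / (fact K * fact (N - K))" using assms by (simp add: binomial_fact)
    moreover have "(fact K :: real) = real K * fact (K-1)"
      using assms by (simp add: fact_reduce)
    moreover have "(fact (N-K) :: real) \<noteq> 0" "(fact N :: real) \<noteq> 0" "(fact (K-1) :: real) \<noteq> 0" by auto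
    ultimately show ?thesis using assms by (simp add: divide_simps) (simp add: ac_simps)
  qed
  finally show ?thesis .
qed

lemma sorted_nth_count:
  fixes s :: "real list"
  assumes "sorted s" "1 \<le> K" "K \<le> length s" and down: "\<And>u v. P v \<Longrightarrow> u \<le> v \<Longrightarrow> P u"
  shows "P (s ! (K-1)) \<longleftrightarrow> K \<le> length (filter P s)"
proof -
  have len: "length (filter P s) = card {j. j < length s \<and> P (s ! j)}"
    by (rule length_filter_conv_card)
  show ?thesis
  proof
    assume h: "P (s ! (K-1))"
    have "{..<K} \<subseteq> {j. j < length s \<and> P (s ! j)}"
    proof
      fix j assume "j \<in> {..<K}"
      then have "j \<le> K - 1" "j < length s" using assms by auto
      then have "s ! j \<le> s ! (K-1)" using assms by (intro sorted_nth_mono) auto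
      then show "j \<in> {j. j < length s \<and> P (s ! j)}" using down[OF h] \<open>j < length s\<close> by auto
    qed
    then have "card {..<K} \<le> card {j. j < length s \<and> P (s ! j)}"
      by (intro card_mono) auto
    then show "K \<le> length (filter P s)" using len by simp
  next
    assume h: "K \<le> length (filter P s)"
    show "P (s ! (K-1))"
    proof (rule ccontr)
      assume np: "\<not> P (s ! (K-1))"
      have "{j. j < length s \<and> P (s ! j)} \<subseteq> {..<K-1}"
      proof
        fix j assume j: "j \<in> {j. j < length s \<and> P (s ! j)}"
        show "j \<in> {..<K-1}"
        proof (rule ccontr)
          assume "j \<notin> {..<K-1}"
          then have "K - 1 \<le> j" by simp
          then have "s ! (K-1) \<le> s ! j" using assms j by (intro sorted_nth_mono) auto
          then show False using down[of "s ! j" "s ! (K-1)"] j np by auto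
        qed
      qed
      then have "card {j. j < length s \<and> P (s ! j)} \<le> K - 1"
        using card_mono[of "{..<K-1}"] by fastforce
      then show False using h len assms by simp
    qed
  qed
qed

lemma count_map: "length (filter P (map x [1..<N+1])) = card {i\<in>{1..N}. P (x i)}"
proof -
  have "length (filter P (map x [1..<N+1])) = length (filter (P \<circ> x) [1..<N+1])"
    by (simp add: filter_map)
  also have "\<dots> = card ({i. (P \<circ> x) i} \<inter> set [1..<N+1])"
    by (rule distinct_length_filter) simp
  also have "{i. (P \<circ> x) i} \<inter> set [1..<N+1] = {i\<in>{1..N}. P (x i)}" by auto
  finally show ?thesis .
qed

lemma kth_count:
  assumes "1 \<le> K" "K \<le> N" and down: "\<And>u v. P v \<Longrightarrow> u \<le> v \<Longrightarrow> P u"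
  shows "P (kth_smallest N K T w) \<longleftrightarrow> K \<le> card {i\<in>{1..N}. P (T i w)}"
proof -
  let ?xs = "map (\<lambda>i. T i w) [1..<N+1]"
  have "P (sort ?xs ! (K-1)) \<longleftrightarrow> K \<le> length (filter P (sort ?xs))"
    using assms by (intro sorted_nth_count) auto
  also have "length (filter P (sort ?xs)) = length (filter P ?xs)"
    by (simp add: filter_sort)
  also have "\<dots> = card {i\<in>{1..N}. P (T i w)}" by (rule count_map)
  finally show ?thesis unfolding kth_smallest_def .
qed

lemma kth_le:
  assumes "1 \<le> K" "K \<le> N"
  shows "kth_smallest N K T w \<le> t \<longleftrightarrow> K \<le> card {i\<in>{1..N}. T i w \<le> t}"
  using kth_count[OF assms, where P="\<lambda>v. v \<le> t" and T=T and w=w] by auto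

lemma kth_less:
  assumes "1 \<le> K" "K \<le> N"
  shows "kth_smallest N K T w < t \<longleftrightarrow> K \<le> card {i\<in>{1..N}. T i w < t}"
  using kth_count[OF assms, where P="\<lambda>v. v < t" and T=T and w=w] by auto

lemma kth_in:
  assumes "1 \<le> K" "K \<le> N"
  shows "\<exists>i\<in>{1..N}. kth_smallest N K T w = T i w"
proof -
  let ?xs = "map (\<lambda>i. T i w) [1..<N+1]"
  have "sort ?xs ! (K-1) \<in> set (sort ?xs)" using assms by (intro nth_mem) auto
  then have "kth_smallest N K T w \<in> set ?xs" unfolding kth_smallest_def by simp
  then show ?thesis by auto
qed

lemma kth_eq_iff:
  assumes "1 \<le> K" "K \<le> N" "inj_on (\<lambda>i. T i w) {1..N}" "m \<in> {1..N}"
  shows "kth_smallest N K T w = T m w \<longleftrightarrow> card {i\<in>{1..N}. T i w < T m w} = K - 1"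
proof -
  have eq: "{i\<in>{1..N}. T i w \<le> T m w} = insert m {i\<in>{1..N}. T i w < T m w}"
  proof (intro equalityI subsetI)
    fix i assume i: "i \<in> {i\<in>{1..N}. T i w \<le> T m w}"
    show "i \<in> insert m {i\<in>{1..N}. T i w < T m w}"
    proof (cases "T i w = T m w")
      case True
      then have "i = m" using assms(3,4) i unfolding inj_on_def by blast
      then show ?thesis by simp
    next
      case False then show ?thesis using i by auto
    qed
  qed (use assms(4) in auto)
  have c: "card {i\<in>{1..N}. T i w \<le> T m w} = Suc (card {i\<in>{1..N}. T i w < T m w})"
    unfolding eq by (subst card_insert_disjoint) auto
  have l1: "kth_smallest N K T w \<le> T m w \<longleftrightarrow> K \<le> Suc (card {i\<in>{1..N}. T i w < T m w})"
    using kth_le[OF assms(1,2), where T=T and w=w and t="T m w"] c by simp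
  have l2: "kth_smallest N K T w < T m w \<longleftrightarrow> K \<le> card {i\<in>{1..N}. T i w < T m w}"
    using kth_less[OF assms(1,2), where T=T and w=w and t="T m w"] by simp
  show ?thesis using l1 l2 assms(1) by linarith
qed

lemma core:
  fixes D :: "real measure" and G :: "real \<Rightarrow> ennreal" and \<phi> :: "nat \<Rightarrow> real \<Rightarrow> real \<Rightarrow> ennreal"
  assumes D: "prob_space D" and I: "finite I" "m \<in> I"
    and G: "G \<in> borel_measurable D"
    and \<phi>: "\<And>i. i \<in> I \<Longrightarrow> (\<lambda>p. \<phi> i (fst p) (snd p)) \<in> borel_measurable (D \<Otimes>\<^sub>M D)"
  shows "(\<integral>\<^sup>+x. G (x m) * (\<Prod>i\<in>I-{m}. \<phi> i (x i) (x m)) \<partial>PiM I (\<lambda>_. D))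
       = (\<integral>\<^sup>+t. G t * (\<Prod>i\<in>I-{m}. \<integral>\<^sup>+y. \<phi> i y t \<partial>D) \<partial>D)"
proof -
  interpret D: prob_space D by (rule D)
  interpret P: product_sigma_finite "\<lambda>_. D"
    unfolding product_sigma_finite_def by (simp add: D.sigma_finite_measure_axioms)
  define J where "J = I - {m}"
  have IJ: "I = insert m J" "finite J" "m \<notin> J" using I unfolding J_def by auto
  have meas: "(\<lambda>x. G (x m) * (\<Prod>i\<in>J. \<phi> i (x i) (x m))) \<in> borel_measurable (PiM (insert m J) (\<lambda>_. D))"
  proof (intro borel_measurable_times_ennreal borel_measurable_prod_ennreal)
    show "(\<lambda>x. G (x m)) \<in> borel_measurable (PiM (insert m J) (\<lambda>_. D))"
      using measurable_comp[OF measurable_component_singleton[of m "insert m J" "\<lambda>_. D"] G]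
      by (simp add: comp_def)
  next
    fix i assume i: "i \<in> J"
    have "(\<lambda>x. (x i, x m)) \<in> measurable (PiM (insert m J) (\<lambda>_. D)) (D \<Otimes>\<^sub>M D)"
      using i by (intro measurable_Pair measurable_component_singleton) auto
    from measurable_comp[OF this \<phi>[of i]] i IJ
    show "(\<lambda>x. \<phi> i (x i) (x m)) \<in> borel_measurable (PiM (insert m J) (\<lambda>_. D))"
      by (simp add: comp_def)
  qed
  have "(\<integral>\<^sup>+x. G (x m) * (\<Prod>i\<in>J. \<phi> i (x i) (x m)) \<partial>PiM (insert m J) (\<lambda>_. D))
      = (\<integral>\<^sup>+t. (\<integral>\<^sup>+y. G ((y(m:=t)) m) * (\<Prod>i\<in>J. \<phi> i ((y(m:=t)) i) ((y(m:=t)) m)) \<partial>PiM J (\<lambda>_. D)) \<partial>D)"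
    by (rule P.product_nn_integral_insert_rev[OF IJ(2,3) meas])
  also have "\<dots> = (\<integral>\<^sup>+t. G t * (\<Prod>i\<in>J. \<integral>\<^sup>+y. \<phi> i y t \<partial>D) \<partial>D)"
  proof (rule nn_integral_cong)
    fix t assume t: "t \<in> space D"
    have mi: "(\<lambda>y. \<phi> i y t) \<in> borel_measurable D" if "i \<in> J" for i
      using measurable_comp[OF measurable_Pair2'[OF t] \<phi>[of i]] that IJ by (simp add: comp_def)
    have "(\<integral>\<^sup>+y. G ((y(m:=t)) m) * (\<Prod>i\<in>J. \<phi> i ((y(m:=t)) i) ((y(m:=t)) m)) \<partial>PiM J (\<lambda>_. D))
        = (\<integral>\<^sup>+y. G t * (\<Prod>i\<in>J. \<phi> i (y i) t) \<partial>PiM J (\<lambda>_. D))"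
      using IJ by (intro nn_integral_cong arg_cong2[where f="(*)"] refl prod.cong) auto
    also have "\<dots> = G t * (\<integral>\<^sup>+y. (\<Prod>i\<in>J. \<phi> i (y i) t) \<partial>PiM J (\<lambda>_. D))"
    proof (rule nn_integral_cmult)
      show "(\<lambda>y. \<Prod>i\<in>J. \<phi> i (y i) t) \<in> borel_measurable (PiM J (\<lambda>_. D))"
      proof (intro borel_measurable_prod_ennreal)
        fix i assume "i \<in> J"
        then show "(\<lambda>y. \<phi> i (y i) t) \<in> borel_measurable (PiM J (\<lambda>_. D))"
          using measurable_comp[OF measurable_component_singleton[of i J "\<lambda>_. D"] mi[of i]]
          by (simp add: comp_def)
      qed
    qed
    also have "(\<integral>\<^sup>+y. (\<Prod>i\<in>J. \<phi> i (y i) t) \<partial>PiM J (\<lambda>_. D)) = (\<Prod>i\<in>J. \<integral>\<^sup>+y. \<phi> i y t \<partial>D)"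
      using P.product_nn_integral_prod[OF IJ(2), of "\<lambda>i y. \<phi> i y t"] mi by simp
    finally show "(\<integral>\<^sup>+y. G ((y(m:=t)) m) * (\<Prod>i\<in>J. \<phi> i ((y(m:=t)) i) ((y(m:=t)) m)) \<partial>PiM J (\<lambda>_. D))
        = G t * (\<Prod>i\<in>J. \<integral>\<^sup>+y. \<phi> i y t \<partial>D)" .
  qed
  finally show ?thesis unfolding J_def[symmetric] using IJ by simp
qed

definition chi :: "nat set \<Rightarrow> nat \<Rightarrow> real \<Rightarrow> real \<Rightarrow> ennreal" where
  "chi S i y t = (if i \<in> S then (if y < t then 1 else 0) else (if t \<le> y then 1 else 0))"

lemma chi_meas:
  fixes D :: "real measure"
  assumes sD: "sets D = sets borel"
  shows "(\<lambda>p. chi S i (fst p) (snd p)) \<in> borel_measurable (D \<Otimes>\<^sub>M D)"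
proof -
  have "(\<lambda>p. chi S i (fst p) (snd p)) \<in> borel_measurable (borel \<Otimes>\<^sub>M borel)"
    unfolding chi_def by measurable
  then show ?thesis
    unfolding measurable_cong_sets[OF sets_pair_measure_cong[OF sD sD] refl, of borel] .
qed

lemma prod_chi:
  assumes "finite J" "S \<subseteq> J"
  shows "(\<Prod>i\<in>J. chi S i (y i) t) = (if S = {i\<in>J. y i < t} then 1 else 0)"
proof (cases "S = {i\<in>J. y i < t}")
  case True
  then have "chi S i (y i) t = 1" if "i \<in> J" for i using that by (auto simp: chi_def)
  then show ?thesis using True by simp
next
  case False
  then obtain i where i: "i \<in> J" "(i \<in> S) \<noteq> (y i < t)" using assms by auto
  then have "chi S i (y i) t = 0" by (auto simp: chi_def)
  then have "(\<Prod>i\<in>J. chi S i (y i) t) = 0" using i assms by (intro prod_zero) auto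
  then show ?thesis using False by simp
qed

lemma sum_prod_chi:
  assumes "finite J" "\<S> \<subseteq> Pow J"
  shows "(\<Sum>S\<in>\<S>. \<Prod>i\<in>J. chi S i (y i) t) = (if {i\<in>J. y i < t} \<in> \<S> then 1 else 0)"
proof -
  have fin: "finite \<S>" using assms by (meson finite_Pow_iff finite_subset)
  have "(\<Sum>S\<in>\<S>. \<Prod>i\<in>J. chi S i (y i) t) = (\<Sum>S\<in>\<S>. if S = {i\<in>J. y i < t} then 1 else 0)"
    using assms by (intro sum.cong refl prod_chi) auto
  also have "\<dots> = (if {i\<in>J. y i < t} \<in> \<S> then 1 else 0)"
    using fin by (simp add: sum.delta')
  finally show ?thesis .
qed

lemma core_meas:
  fixes D :: "real measure" and G :: "real \<Rightarrow> ennreal" and \<phi> :: "nat \<Rightarrow> real \<Rightarrow> real \<Rightarrow> ennreal"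
  assumes m: "m \<in> I"
    and G: "G \<in> borel_measurable D"
    and \<phi>: "\<And>i. i \<in> I \<Longrightarrow> (\<lambda>p. \<phi> i (fst p) (snd p)) \<in> borel_measurable (D \<Otimes>\<^sub>M D)"
  shows "(\<lambda>x. G (x m) * (\<Prod>i\<in>I-{m}. \<phi> i (x i) (x m))) \<in> borel_measurable (PiM I (\<lambda>_. D))"
proof (intro borel_measurable_times_ennreal borel_measurable_prod_ennreal)
  show "(\<lambda>x. G (x m)) \<in> borel_measurable (PiM I (\<lambda>_. D))"
    using measurable_comp[OF measurable_component_singleton[of m I "\<lambda>_. D"] G] m
    by (simp add: comp_def)
next
  fix i assume i: "i \<in> I - {m}"
  have "(\<lambda>x. (x i, x m)) \<in> measurable (PiM I (\<lambda>_. D)) (D \<Otimes>\<^sub>M D)"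
    using i m by (intro measurable_Pair measurable_component_singleton) auto
  from measurable_comp[OF this \<phi>[of i]] i
  show "(\<lambda>x. \<phi> i (x i) (x m)) \<in> borel_measurable (PiM I (\<lambda>_. D))"
    by (simp add: comp_def)
qed

lemma term_integral:
  fixes D :: "real measure" and G :: "real \<Rightarrow> ennreal"
  assumes D: "prob_space D" and sD: "sets D = sets borel" and I: "finite I" "m \<in> I"
    and G: "G \<in> borel_measurable borel"
    and SS: "\<S> \<subseteq> Pow (I - {m})" and cardS: "\<And>S. S \<in> \<S> \<Longrightarrow> card S = k"
  shows "(\<integral>\<^sup>+x. G (x m) * (\<Sum>S\<in>\<S>. \<Prod>i\<in>I-{m}. chi S i (x i) (x m)) \<partial>PiM I (\<lambda>_. D))
     = of_nat (card \<S>) * (\<integral>\<^sup>+t. G t * emeasure D {..<t} ^ k * emeasure D {t..} ^ (card I - 1 - k) \<partial>D)"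
proof -
  interpret D: prob_space D by (rule D)
  have GD: "G \<in> borel_measurable D" using G by (simp add: measurable_cong_sets[OF sD refl])
  have fin: "finite \<S>" using SS I by (meson finite_Diff finite_Pow_iff finite_subset)
  have "(\<integral>\<^sup>+x. G (x m) * (\<Sum>S\<in>\<S>. \<Prod>i\<in>I-{m}. chi S i (x i) (x m)) \<partial>PiM I (\<lambda>_. D))
      = (\<integral>\<^sup>+x. (\<Sum>S\<in>\<S>. G (x m) * (\<Prod>i\<in>I-{m}. chi S i (x i) (x m))) \<partial>PiM I (\<lambda>_. D))"
    by (simp add: sum_distrib_left)
  also have "\<dots> = (\<Sum>S\<in>\<S>. \<integral>\<^sup>+x. G (x m) * (\<Prod>i\<in>I-{m}. chi S i (x i) (x m)) \<partial>PiM I (\<lambda>_. D))"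
    by (intro nn_integral_sum core_meas[OF I(2) GD] chi_meas[OF sD])
  also have "\<dots> = (\<Sum>S\<in>\<S>. \<integral>\<^sup>+t. G t * emeasure D {..<t} ^ k * emeasure D {t..} ^ (card I - 1 - k) \<partial>D)"
  proof (rule sum.cong[OF refl])
    fix S assume S: "S \<in> \<S>"
    have SJ: "S \<subseteq> I - {m}" using S SS by auto
    have "(\<integral>\<^sup>+x. G (x m) * (\<Prod>i\<in>I-{m}. chi S i (x i) (x m)) \<partial>PiM I (\<lambda>_. D))
        = (\<integral>\<^sup>+t. G t * (\<Prod>i\<in>I-{m}. \<integral>\<^sup>+y. chi S i y t \<partial>D) \<partial>D)"
      by (rule core[OF D I GD chi_meas[OF sD]])
    also have "\<dots> = (\<integral>\<^sup>+t. G t * emeasure D {..<t} ^ k * emeasure D {t..} ^ (card I - 1 - k) \<partial>D)"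
    proof (rule nn_integral_cong)
      fix t
      have int: "(\<integral>\<^sup>+y. chi S i y t \<partial>D) = (if i \<in> S then emeasure D {..<t} else emeasure D {t..})" for i
      proof -
        have "(\<lambda>y. chi S i y t) = (if i \<in> S then indicator {..<t} else indicator {t..})"
          by (auto simp: chi_def fun_eq_iff)
        then show ?thesis using sD by (simp add: nn_integral_indicator)
      qed
      have "(\<Prod>i\<in>I-{m}. \<integral>\<^sup>+y. chi S i y t \<partial>D)
          = (\<Prod>i\<in>I-{m}. if i \<in> S then emeasure D {..<t} else emeasure D {t..})"
        by (simp add: int)
      also have "\<dots> = emeasure D {..<t} ^ card ((I-{m}) \<inter> {i. i \<in> S}) * emeasure D {t..} ^ card ((I-{m}) \<inter> - {i. i \<in> S})"
        using I by (simp add: prod.If_cases)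
      also have "(I-{m}) \<inter> {i. i \<in> S} = S" using SJ by auto
      also have "card ((I-{m}) \<inter> - {i. i \<in> S}) = card I - 1 - k"
      proof -
        have "(I-{m}) \<inter> - {i. i \<in> S} = (I - {m}) - S" by auto
        moreover have "card (I - {m} - S) = card (I - {m}) - card S"
          using SJ I by (intro card_Diff_subset) (auto intro: finite_subset)
        moreover have "card (I - {m}) = card I - 1" using I by simp
        ultimately show ?thesis using cardS[OF S] by simp
      qed
      finally show "G t * (\<Prod>i\<in>I-{m}. \<integral>\<^sup>+y. chi S i y t \<partial>D)
          = G t * emeasure D {..<t} ^ k * emeasure D {t..} ^ (card I - 1 - k)"
        using cardS[OF S] by (simp add: mult.assoc)
    qed
    finally show "(\<integral>\<^sup>+x. G (x m) * (\<Prod>i\<in>I-{m}. chi S i (x i) (x m)) \<partial>PiM I (\<lambda>_. D))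
        = (\<integral>\<^sup>+t. G t * emeasure D {..<t} ^ k * emeasure D {t..} ^ (card I - 1 - k) \<partial>D)" .
  qed
  also have "\<dots> = of_nat (card \<S>) * (\<integral>\<^sup>+t. G t * emeasure D {..<t} ^ k * emeasure D {t..} ^ (card I - 1 - k) \<partial>D)"
    by simp
  finally show ?thesis .
qed

lemma AE_component:
  fixes D :: "real measure"
  assumes D: "prob_space D" and I: "m \<in> I" and Q: "{t\<in>space D. Q t} \<in> sets D"
    and AE: "AE t in D. Q t"
  shows "AE x in PiM I (\<lambda>_. D). Q (x m)"
proof -
  have "distr (PiM I (\<lambda>_. D)) D (\<lambda>\<omega>. \<omega> m) = D"
    using D I by (intro distr_PiM_component) auto
  note eq = this
  have "AE t in distr (PiM I (\<lambda>_. D)) D (\<lambda>\<omega>. \<omega> m). Q t" unfolding eq by (rule AE)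
  then show ?thesis
    using I Q by (subst (asm) AE_distr_iff) (auto intro: measurable_component_singleton)
qed

lemma AE_neq:
  fixes D :: "real measure" and I :: "nat set"
  assumes D: "prob_space D" and sD: "sets D = sets borel" and I: "finite I" "i \<in> I" "j \<in> I" "i \<noteq> j"
    and atom: "\<And>t. emeasure D {t} = 0"
  shows "AE x in PiM I (\<lambda>_. D). x i \<noteq> x j"
proof -
  interpret D: prob_space D by (rule D)
  define \<phi> :: "nat \<Rightarrow> real \<Rightarrow> real \<Rightarrow> ennreal" where
    "\<phi> = (\<lambda>k y t. if k = j then (if y = t then 1 else 0) else 1)"
  have \<phi>m: "(\<lambda>p. \<phi> k (fst p) (snd p)) \<in> borel_measurable (D \<Otimes>\<^sub>M D)" for k
  proof -
    have "(\<lambda>p. \<phi> k (fst p) (snd p)) \<in> borel_measurable (borel \<Otimes>\<^sub>M borel)"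
      unfolding \<phi>_def by measurable
    then show ?thesis
      unfolding measurable_cong_sets[OF sets_pair_measure_cong[OF sD sD] refl, of borel] .
  qed
  have GD: "(\<lambda>_. 1::ennreal) \<in> borel_measurable D" by simp
  have "(\<integral>\<^sup>+x. 1 * (\<Prod>k\<in>I-{i}. \<phi> k (x k) (x i)) \<partial>PiM I (\<lambda>_. D))
      = (\<integral>\<^sup>+t. 1 * (\<Prod>k\<in>I-{i}. \<integral>\<^sup>+y. \<phi> k y t \<partial>D) \<partial>D)"
    by (rule core[OF D I(1,2) GD \<phi>m])
  also have "\<dots> = (\<integral>\<^sup>+t. 0 \<partial>D)"
  proof (rule nn_integral_cong)
    fix t
    have "(\<integral>\<^sup>+y. \<phi> j y t \<partial>D) = emeasure D {t}"
    proof -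
      have "(\<lambda>y. \<phi> j y t) = indicator {t}" by (auto simp: \<phi>_def fun_eq_iff)
      then show ?thesis using sD by (simp add: nn_integral_indicator)
    qed
    then have "(\<integral>\<^sup>+y. \<phi> j y t \<partial>D) = 0" using atom by simp
    then show "1 * (\<Prod>k\<in>I-{i}. \<integral>\<^sup>+y. \<phi> k y t \<partial>D) = 0"
      using I by (simp only: mult_1, intro prod_zero) auto
  qed
  finally have z: "(\<integral>\<^sup>+x. (\<Prod>k\<in>I-{i}. \<phi> k (x k) (x i)) \<partial>PiM I (\<lambda>_. D)) = 0" by simp
  have eqf: "(\<Prod>k\<in>I-{i}. \<phi> k (x k) (x i)) = indicator {x. x j = x i} x" for x
  proof -
    have "(\<Prod>k\<in>I-{i}. \<phi> k (x k) (x i)) = \<phi> j (x j) (x i) * (\<Prod>k\<in>I-{i}-{j}. \<phi> k (x k) (x i))"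
      using I by (subst prod.remove[of _ j]) auto
    also have "(\<Prod>k\<in>I-{i}-{j}. \<phi> k (x k) (x i)) = 1" by (auto simp: \<phi>_def intro!: prod.neutral)
    finally show ?thesis by (simp add: \<phi>_def indicator_def)
  qed
  have meas: "(\<lambda>x. (\<Prod>k\<in>I-{i}. \<phi> k (x k) (x i))) \<in> borel_measurable (PiM I (\<lambda>_. D))"
    using core_meas[OF I(2) GD \<phi>m] by simp
  have "AE x in PiM I (\<lambda>_. D). (\<Prod>k\<in>I-{i}. \<phi> k (x k) (x i)) = 0"
    using z meas by (subst (asm) nn_integral_0_iff_AE) auto
  then show ?thesis by eventually_elim (auto simp: eqf)
qed

definition Dm :: "real \<Rightarrow> real \<Rightarrow> real measure" where
  "Dm l c = distr (density lborel (exponential_density l)) borel (\<lambda>x. x + c)"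

lemma shexp_bounds: "l > 0 \<Longrightarrow> 0 \<le> shexp_cdf l c t \<and> shexp_cdf l c t \<le> 1"
  by (auto simp: shexp_cdf_def)

lemma Dm_sets: "sets (Dm l c) = sets borel"
  by (simp add: Dm_def)

lemma Dm_space: "space (Dm l c) = UNIV"
  by (simp add: Dm_def)

lemma Dm_prob: "l > 0 \<Longrightarrow> prob_space (Dm l c)"
  unfolding Dm_def
  by (intro prob_space.prob_space_distr prob_space_exponential_density) auto

lemma Dm_emeasure: "A \<in> sets borel \<Longrightarrow> emeasure (Dm l c) A = emeasure (density lborel (exponential_density l)) ((\<lambda>x. x + c) -` A)"
  unfolding Dm_def by (subst emeasure_distr) auto

lemma Dm_atMost:
  assumes "l > 0" shows "emeasure (Dm l c) {..t} = ennreal (shexp_cdf l c t)"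
proof -
  have "(\<lambda>x. x + c) -` {..t} = {..t - c}" by auto
  then have "emeasure (Dm l c) {..t} = erlang_CDF 0 l (t - c)"
    using assms by (simp add: Dm_emeasure emeasure_erlang_density)
  also have "erlang_CDF 0 l (t - c) = shexp_cdf l c t"
    by (auto simp: erlang_CDF_0 shexp_cdf_def)
  finally show ?thesis .
qed

lemma Dm_single:
  assumes "l > 0" shows "emeasure (Dm l c) {t} = 0"
proof -
  have "(\<lambda>x. x + c) -` {t} = {t - c}" by auto
  then have "emeasure (Dm l c) {t} = emeasure (density lborel (exponential_density l)) {t - c}"
    by (simp add: Dm_emeasure)
  also have "\<dots> = (\<integral>\<^sup>+x. ennreal (exponential_density l x) * indicator {t - c} x \<partial>lborel)"
    by (subst emeasure_density) auto
  also have "\<dots> = 0"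
    by (rule nn_integral_zero') (use AE_lborel_singleton[of "t - c"] in \<open>auto elim!: eventually_mono\<close>)
  finally show ?thesis .
qed

lemma Dm_lessThan:
  assumes "l > 0" shows "emeasure (Dm l c) {..<t} = ennreal (shexp_cdf l c t)"
proof -
  have "emeasure (Dm l c) {..<t} + emeasure (Dm l c) {t} = emeasure (Dm l c) ({..<t} \<union> {t})"
    by (intro plus_emeasure) (auto simp: Dm_sets)
  also have "{..<t} \<union> {t} = {..t}" by auto
  finally show ?thesis using Dm_single[OF assms] Dm_atMost[OF assms] by simp
qed

lemma Dm_atLeast:
  assumes "l > 0" shows "emeasure (Dm l c) {t..} = ennreal (1 - shexp_cdf l c t)"
proof -
  interpret prob_space "Dm l c" by (rule Dm_prob[OF assms])
  have "measure (Dm l c) {..<t} = shexp_cdf l c t"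
    using Dm_lessThan[OF assms] shexp_bounds[OF assms] by (simp add: measure_def)
  moreover have "measure (Dm l c) (space (Dm l c) - {..<t}) = 1 - measure (Dm l c) {..<t}"
    by (rule prob_compl) (simp add: Dm_sets)
  moreover have "space (Dm l c) - {..<t} = {t..}" by (auto simp: Dm_space)
  ultimately show ?thesis by (simp add: emeasure_eq_measure)
qed

lemma Dm_cdf: "l > 0 \<Longrightarrow> cdf (Dm l c) t = shexp_cdf l c t"
  using Dm_atMost[of l c t] shexp_bounds[of l c t] by (simp add: cdf_def measure_def)

lemma Dm_AE:
  assumes "l > 0" shows "AE t in Dm l c. c < t"
proof -
  have "AE x in density lborel (exponential_density l). c < x + c"
  proof (subst AE_density)
    show "AE x in lborel. 0 < ennreal (exponential_density l x) \<longrightarrow> c < x + c"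
      using AE_lborel_singleton[of 0]
      by eventually_elim (auto simp: exponential_density_def)
  qed simp
  then show ?thesis unfolding Dm_def by (subst AE_distr_iff) auto
qed

lemma Dm_nn:
  assumes "\<psi> \<in> borel_measurable borel"
  shows "(\<integral>\<^sup>+t. \<psi> t \<partial>Dm l c) = (\<integral>\<^sup>+s. ennreal (exponential_density l s) * \<psi> (s + c) \<partial>lborel)"
  unfolding Dm_def using assms
  by (subst nn_integral_distr) (auto simp: nn_integral_density)

lemma piece0:
  fixes a l Dl :: real assumes "a > 0" "Dl \<ge> 0"
  shows "(LINT s|lborel. indicator {0..Dl} s * (l * exp (- (a * s)))) = l / a * (1 - exp (- (a * Dl)))"
proof -
  have I: "(LINT s|lborel. indicator {0..Dl} s *\<^sub>R (l * exp (- (a * s))))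
      = (- l / a * exp (- (a * Dl))) - (- l / a * exp (- (a * 0)))"
  proof (rule integral_FTC_atLeastAtMost[OF assms(2)])
    fix x
    show "((\<lambda>s. - l / a * exp (- (a * s))) has_vector_derivative l * exp (- (a * x))) (at x within {0..Dl})"
      unfolding has_real_derivative_iff_has_vector_derivative[symmetric]
      using assms by (auto intro!: derivative_eq_intros simp: field_simps)
  next
    show "continuous_on {0..Dl} (\<lambda>s. l * exp (- (a * s)))" by (intro continuous_intros)
  qed
  also have "\<dots> = l / a * (1 - exp (- (a * Dl)))" using assms by (simp add: field_simps)
  finally show ?thesis by (simp only: real_scaleR_def)
qed

lemma piece1:
  fixes a l Dl c :: real assumes "a > 0" "Dl \<ge> 0"
  shows "(LINT s|lborel. indicator {0..Dl} s * (l * (s + c) * exp (- (a * s))))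
       = l / a^2 * (1 + c * a - (1 + (Dl + c) * a) * exp (- (a * Dl)))"
proof -
  have I: "(LINT s|lborel. indicator {0..Dl} s *\<^sub>R (l * (s + c) * exp (- (a * s))))
      = (- l / a^2 * exp (- (a * Dl)) * (1 + (Dl + c) * a)) - (- l / a^2 * exp (- (a * 0)) * (1 + (0 + c) * a))"
  proof (rule integral_FTC_atLeastAtMost[OF assms(2)])
    fix x
    show "((\<lambda>s. - l / a^2 * exp (- (a * s)) * (1 + (s + c) * a)) has_vector_derivative l * (x + c) * exp (- (a * x))) (at x within {0..Dl})"
      unfolding has_real_derivative_iff_has_vector_derivative[symmetric]
      using assms by (auto intro!: derivative_eq_intros simp: field_simps power2_eq_square)
  next
    show "continuous_on {0..Dl} (\<lambda>s. l * (s + c) * exp (- (a * s)))" by (intro continuous_intros)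
  qed
  also have "\<dots> = l / a^2 * (1 + c * a - (1 + (Dl + c) * a) * exp (- (a * Dl)))" using assms by (simp add: field_simps)
  finally show ?thesis by (simp only: real_scaleR_def)
qed

lemma piece2:
  fixes a l Dl c :: real assumes "a > 0" "Dl \<ge> 0"
  shows "(LINT s|lborel. indicator {0..Dl} s * (l * (s + c)^2 * exp (- (a * s))))
       = l / a^3 * ((1 + c * a)^2 + 1 - ((1 + (Dl + c) * a)^2 + 1) * exp (- (a * Dl)))"
proof -
  have I: "(LINT s|lborel. indicator {0..Dl} s *\<^sub>R (l * (s + c)^2 * exp (- (a * s))))
      = (- l / a^3 * exp (- (a * Dl)) * ((1 + (Dl + c) * a)^2 + 1)) - (- l / a^3 * exp (- (a * 0)) * ((1 + (0 + c) * a)^2 + 1))"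
  proof (rule integral_FTC_atLeastAtMost[OF assms(2)])
    fix x
    show "((\<lambda>s. - l / a^3 * exp (- (a * s)) * ((1 + (s + c) * a)^2 + 1)) has_vector_derivative l * (x + c)^2 * exp (- (a * x))) (at x within {0..Dl})"
      unfolding has_real_derivative_iff_has_vector_derivative[symmetric]
      using assms by (auto intro!: derivative_eq_intros simp: field_simps power2_eq_square power3_eq_cube)
  next
    show "continuous_on {0..Dl} (\<lambda>s. l * (s + c)^2 * exp (- (a * s)))" by (intro continuous_intros)
  qed
  also have "\<dots> = l / a^3 * ((1 + c * a)^2 + 1 - ((1 + (Dl + c) * a)^2 + 1) * exp (- (a * Dl)))" using assms by (simp add: field_simps)
  finally show ?thesis by (simp only: real_scaleR_def)
qed

definition Hf :: "real \<Rightarrow> real \<Rightarrow> nat \<Rightarrow> nat \<Rightarrow> nat \<Rightarrow> real \<Rightarrow> real" where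
  "Hf l c N K p s = l * exp (- (s * l)) * (s + c) ^ p * (1 - exp (- l * s)) ^ (K - 1) * exp (- l * s) ^ (N - K)"

lemma shexp_shift: "s \<ge> 0 \<Longrightarrow> shexp_cdf l c (s + c) = 1 - exp (- l * s)"
  by (auto simp: shexp_cdf_def)

lemma shexp_meas[measurable]: "shexp_cdf l c \<in> borel_measurable borel"
  unfolding shexp_cdf_def[abs_def] by measurable

lemma J_eq:
  assumes l: "l > 0" and c: "c > 0" and TD: "TD > c"
  shows "(\<integral>\<^sup>+t. (ennreal (t ^ p) * indicator {..<TD} t) * emeasure (Dm l c) {..<t} ^ (K - 1)
            * emeasure (Dm l c) {t..} ^ (N - K) \<partial>Dm l c)
         = ennreal (LINT s|lborel. indicator {0..TD - c} s * Hf l c N K p s)"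
    and "(LINT s|lborel. indicator {0..TD - c} s * Hf l c N K p s) \<ge> 0"
proof -
  define \<psi> where "\<psi> t = (ennreal (t ^ p) * indicator {..<TD} t) * ennreal (shexp_cdf l c t) ^ (K - 1)
            * ennreal (1 - shexp_cdf l c t) ^ (N - K)" for t
  have \<psi>m: "\<psi> \<in> borel_measurable borel" unfolding \<psi>_def by measurable
  have "(\<integral>\<^sup>+t. (ennreal (t ^ p) * indicator {..<TD} t) * emeasure (Dm l c) {..<t} ^ (K - 1)
            * emeasure (Dm l c) {t..} ^ (N - K) \<partial>Dm l c) = (\<integral>\<^sup>+t. \<psi> t \<partial>Dm l c)"
    by (simp add: \<psi>_def Dm_lessThan[OF l] Dm_atLeast[OF l])
  also have "\<dots> = (\<integral>\<^sup>+s. ennreal (exponential_density l s) * \<psi> (s + c) \<partial>lborel)"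
    by (rule Dm_nn[OF \<psi>m])
  also have "\<dots> = (\<integral>\<^sup>+s. ennreal (indicator {0..TD - c} s * Hf l c N K p s) \<partial>lborel)"
  proof (rule nn_integral_cong_AE)
    show "AE s in lborel. ennreal (exponential_density l s) * \<psi> (s + c) = ennreal (indicator {0..TD - c} s * Hf l c N K p s)"
      using AE_lborel_singleton[of "TD - c"]
    proof eventually_elim
      case (elim s)
      show ?case
      proof (cases "s < 0")
        case True then show ?thesis by (simp add: exponential_density_def)
      next
        case False
        show ?thesis
        proof (cases "s < TD - c")
          case True
          have pos: "0 \<le> (s + c) ^ p" "0 \<le> 1 - exp (- l * s)" "0 \<le> exp (- l * s)" "0 \<le> l * exp (- (s * l))"
            using False c l by auto
          have "ennreal (exponential_density l s) * \<psi> (s + c)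
              = ennreal (l * exp (- (s * l))) * (ennreal ((s + c) ^ p) * ennreal (1 - exp (- l * s)) ^ (K - 1)
                 * ennreal (exp (- l * s)) ^ (N - K))"
            using False True by (simp add: exponential_density_def \<psi>_def shexp_shift mult.commute)
          also have "\<dots> = ennreal (Hf l c N K p s)"
            using pos unfolding Hf_def
            by (simp add: ennreal_power ennreal_mult'[symmetric] mult.assoc)
          finally show ?thesis using False True by simp
        next
          case False2: False
          then have "s > TD - c" using elim by auto
          then show ?thesis by (simp add: \<psi>_def)
        qed
      qed
    qed
  qed
  also have "\<dots> = ennreal (LINT s|lborel. indicator {0..TD - c} s * Hf l c N K p s)"
  proof (rule nn_integral_eq_integral)
    have "set_integrable lborel {0..TD - c} (Hf l c N K p)"
      unfolding Hf_def by (intro borel_integrable_atLeastAtMost' continuous_intros)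
    then show "integrable lborel (\<lambda>s. indicator {0..TD - c} s * Hf l c N K p s)"
      by (simp add: set_integrable_def)
    show "AE s in lborel. 0 \<le> indicator {0..TD - c} s * Hf l c N K p s"
      using c l by (auto simp: Hf_def indicator_def)
  qed
  finally show "(\<integral>\<^sup>+t. (ennreal (t ^ p) * indicator {..<TD} t) * emeasure (Dm l c) {..<t} ^ (K - 1)
            * emeasure (Dm l c) {t..} ^ (N - K) \<partial>Dm l c)
         = ennreal (LINT s|lborel. indicator {0..TD - c} s * Hf l c N K p s)" .
  show "(LINT s|lborel. indicator {0..TD - c} s * Hf l c N K p s) \<ge> 0"
    using c l by (intro integral_nonneg_AE) (auto simp: Hf_def indicator_def)
qed

lemma Hf_expand:
  assumes "1 \<le> K" "K \<le> N"
  shows "Hf l c N K p s = (\<Sum>j<K. real ((K-1) choose j) * (-1)^j * (l * (s + c) ^ p * exp (- ((l * coefU N K j) * s))))"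
proof -
  define e where "e = exp (- l * s)"
  have bin: "(1 - e) ^ (K - 1) = (\<Sum>j<K. real ((K-1) choose j) * (-1)^j * e ^ j)"
  proof -
    have "(1 - e) ^ (K - 1) = (-e + 1) ^ (K - 1)" by simp
    also have "\<dots> = (\<Sum>j\<le>K-1. real ((K-1) choose j) * (-e)^j * 1 ^ (K - 1 - j))"
      by (rule binomial_ring)
    also have "{..K-1} = {..<K}" using assms by auto
    finally show ?thesis by (simp add: power_minus' mult.assoc)
  qed
  have ex: "exp (- (s * l)) * e ^ j * e ^ (N - K) = exp (- ((l * coefU N K j) * s))" for j
  proof -
    have "exp (- (s * l)) * e ^ j * e ^ (N - K) = exp (- (s * l) + real j * (- l * s) + real (N - K) * (- l * s))"
      by (simp only: e_def exp_add exp_of_nat_mult)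
    also have "- (s * l) + real j * (- l * s) + real (N - K) * (- l * s) = - ((l * coefU N K j) * s)"
      using assms by (simp add: coefU_def of_nat_diff algebra_simps)
    finally show ?thesis .
  qed
  have "Hf l c N K p s = l * (s + c) ^ p * exp (- (s * l)) * e ^ (N - K) * (1 - e) ^ (K - 1)"
    unfolding Hf_def e_def by (simp add: ac_simps)
  also have "\<dots> = (\<Sum>j<K. real ((K-1) choose j) * (-1)^j * (l * (s + c) ^ p * (exp (- (s * l)) * e ^ j * e ^ (N - K))))"
    unfolding bin sum_distrib_left by (intro sum.cong refl) (simp add: ac_simps)
  also have "\<dots> = (\<Sum>j<K. real ((K-1) choose j) * (-1)^j * (l * (s + c) ^ p * exp (- ((l * coefU N K j) * s))))"
    by (simp add: ex)
  finally show ?thesis .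
qed

lemma coefU_pos: "K \<le> N \<Longrightarrow> coefU N K j > 0"
  by (simp add: coefU_def)

lemma Jr_expand:
  assumes "1 \<le> K" "K \<le> N"
  shows "(LINT s|lborel. indicator {0..Dl} s * Hf l c N K p s)
       = (\<Sum>j<K. real ((K-1) choose j) * (-1)^j * (LINT s|lborel. indicator {0..Dl} s * (l * (s + c) ^ p * exp (- ((l * coefU N K j) * s)))))"
proof -
  have int: "integrable lborel (\<lambda>s. indicator {0..Dl} s * (l * (s + c) ^ p * exp (- ((l * coefU N K j) * s))))" for j
  proof -
    have "set_integrable lborel {0..Dl} (\<lambda>s. l * (s + c) ^ p * exp (- ((l * coefU N K j) * s)))"
      by (intro borel_integrable_atLeastAtMost' continuous_intros)
    then show ?thesis by (simp add: set_integrable_def)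
  qed
  have "(LINT s|lborel. indicator {0..Dl} s * Hf l c N K p s)
      = (LINT s|lborel. (\<Sum>j<K. real ((K-1) choose j) * (-1)^j * (indicator {0..Dl} s * (l * (s + c) ^ p * exp (- ((l * coefU N K j) * s))))))"
    by (intro Bochner_Integration.integral_cong refl) (simp add: Hf_expand[OF assms] sum_distrib_left ac_simps)
  also have "\<dots> = (\<Sum>j<K. (LINT s|lborel. real ((K-1) choose j) * (-1)^j * (indicator {0..Dl} s * (l * (s + c) ^ p * exp (- ((l * coefU N K j) * s))))))"
    by (subst Bochner_Integration.integral_sum) (auto intro: integrable_mult_right int)
  also have "\<dots> = (\<Sum>j<K. real ((K-1) choose j) * (-1)^j * (LINT s|lborel. indicator {0..Dl} s * (l * (s + c) ^ p * exp (- ((l * coefU N K j) * s)))))"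
    by (intro sum.cong refl) (rule integral_mult_right_zero)
  finally show ?thesis .
qed

lemma Jr0:
  assumes "1 \<le> K" "K \<le> N" "l > 0" "TD > c"
  shows "real K * real (N choose K) * (LINT s|lborel. indicator {0..TD - c} s * Hf l c N K 0 s)
       = 1 - coefZ l c TD N K"
proof -
  have U: "coefU N K j > 0" for j using assms coefU_pos by auto
  have "real K * real (N choose K) * (LINT s|lborel. indicator {0..TD - c} s * Hf l c N K 0 s)
      = (\<Sum>j<K. real K * real (N choose K) * (real ((K-1) choose j) * (-1)^j *
           (LINT s|lborel. indicator {0..TD - c} s * (l * exp (- ((l * coefU N K j) * s))))))"
    using Jr_expand[OF assms(1,2), of "TD - c" l c 0] by (simp add: sum_distrib_left)
  also have "\<dots> = (\<Sum>j<K. coefB N K j / coefU N K j - coefB N K j * coefV l c TD N K j / coefU N K j)"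
  proof (intro sum.cong refl)
    fix j
    have "(LINT s|lborel. indicator {0..TD - c} s * (l * exp (- ((l * coefU N K j) * s))))
        = l / (l * coefU N K j) * (1 - exp (- ((l * coefU N K j) * (TD - c))))"
      using U[of j] assms by (intro piece0) auto
    also have "\<dots> = (1 - coefV l c TD N K j) / coefU N K j"
      using assms by (simp add: coefV_def field_simps)
    finally have I: "(LINT s|lborel. indicator {0..TD - c} s * (l * exp (- ((l * coefU N K j) * s))))
        = (1 - coefV l c TD N K j) / coefU N K j" .
    show "real K * real (N choose K) * (real ((K-1) choose j) * (-1)^j *
           (LINT s|lborel. indicator {0..TD - c} s * (l * exp (- ((l * coefU N K j) * s)))))
        = coefB N K j / coefU N K j - coefB N K j * coefV l c TD N K j / coefU N K j"
      unfolding I by (simp add: coefB_def diff_divide_distrib algebra_simps)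
  qed
  also have "\<dots> = 1 - coefZ l c TD N K"
    by (simp add: sum_subtractf sumBU[OF assms(1,2)] coefZ_def)
  finally show ?thesis .
qed

lemma Jr1:
  assumes "1 \<le> K" "K \<le> N" "l > 0" "TD > c"
  shows "real K * real (N choose K) * (LINT s|lborel. indicator {0..TD - c} s * Hf l c N K 1 s)
       = (\<Sum>j<K. coefB N K j / (l * (coefU N K j)^2) *
             (1 + c * l * coefU N K j - (1 + TD * l * coefU N K j) * coefV l c TD N K j))"
proof -
  have U: "coefU N K j > 0" for j using assms coefU_pos by auto
  have "real K * real (N choose K) * (LINT s|lborel. indicator {0..TD - c} s * Hf l c N K 1 s)
      = (\<Sum>j<K. real K * real (N choose K) * (real ((K-1) choose j) * (-1)^j *
           (LINT s|lborel. indicator {0..TD - c} s * (l * (s + c) * exp (- ((l * coefU N K j) * s))))))"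
    using Jr_expand[OF assms(1,2), of "TD - c" l c 1] by (simp add: sum_distrib_left)
  also have "\<dots> = (\<Sum>j<K. coefB N K j / (l * (coefU N K j)^2) *
             (1 + c * l * coefU N K j - (1 + TD * l * coefU N K j) * coefV l c TD N K j))"
  proof (intro sum.cong refl)
    fix j
    have "(LINT s|lborel. indicator {0..TD - c} s * (l * (s + c) * exp (- ((l * coefU N K j) * s))))
        = l / (l * coefU N K j)^2 * (1 + c * (l * coefU N K j) - (1 + (TD - c + c) * (l * coefU N K j)) * exp (- ((l * coefU N K j) * (TD - c))))"
      using U[of j] assms by (intro piece1) auto
    also have "\<dots> = 1 / (l * (coefU N K j)^2) * (1 + c * l * coefU N K j - (1 + TD * l * coefU N K j) * coefV l c TD N K j)"
      using assms U[of j] by (simp add: coefV_def field_simps power2_eq_square)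
    finally show "real K * real (N choose K) * (real ((K-1) choose j) * (-1)^j *
           (LINT s|lborel. indicator {0..TD - c} s * (l * (s + c) * exp (- ((l * coefU N K j) * s)))))
        = coefB N K j / (l * (coefU N K j)^2) *
             (1 + c * l * coefU N K j - (1 + TD * l * coefU N K j) * coefV l c TD N K j)"
      by (simp add: coefB_def)
  qed
  finally show ?thesis .
qed

lemma Jr2:
  assumes "1 \<le> K" "K \<le> N" "l > 0" "TD > c"
  shows "real K * real (N choose K) * (LINT s|lborel. indicator {0..TD - c} s * Hf l c N K 2 s)
       = (\<Sum>j<K. coefB N K j / (l^2 * (coefU N K j)^3) *
             ((1 + c * l * coefU N K j)^2 + 1
              - ((1 + TD * l * coefU N K j)^2 + 1) * coefV l c TD N K j))"
proof -
  have U: "coefU N K j > 0" for j using assms coefU_pos by auto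
  have "real K * real (N choose K) * (LINT s|lborel. indicator {0..TD - c} s * Hf l c N K 2 s)
      = (\<Sum>j<K. real K * real (N choose K) * (real ((K-1) choose j) * (-1)^j *
           (LINT s|lborel. indicator {0..TD - c} s * (l * (s + c)^2 * exp (- ((l * coefU N K j) * s))))))"
    using Jr_expand[OF assms(1,2), of "TD - c" l c 2] by (simp add: sum_distrib_left)
  also have "\<dots> = (\<Sum>j<K. coefB N K j / (l^2 * (coefU N K j)^3) *
             ((1 + c * l * coefU N K j)^2 + 1
              - ((1 + TD * l * coefU N K j)^2 + 1) * coefV l c TD N K j))"
  proof (intro sum.cong refl)
    fix j
    have "(LINT s|lborel. indicator {0..TD - c} s * (l * (s + c)^2 * exp (- ((l * coefU N K j) * s))))
        = l / (l * coefU N K j)^3 * ((1 + c * (l * coefU N K j))^2 + 1 - ((1 + (TD - c + c) * (l * coefU N K j))^2 + 1) * exp (- ((l * coefU N K j) * (TD - c))))"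
      using U[of j] assms by (intro piece2) auto
    also have "\<dots> = 1 / (l^2 * (coefU N K j)^3) * ((1 + c * l * coefU N K j)^2 + 1
              - ((1 + TD * l * coefU N K j)^2 + 1) * coefV l c TD N K j)"
      using assms U[of j] by (simp add: coefV_def field_simps power2_eq_square power3_eq_cube)
    finally show "real K * real (N choose K) * (real ((K-1) choose j) * (-1)^j *
           (LINT s|lborel. indicator {0..TD - c} s * (l * (s + c)^2 * exp (- ((l * coefU N K j) * s)))))
        = coefB N K j / (l^2 * (coefU N K j)^3) *
             ((1 + c * l * coefU N K j)^2 + 1
              - ((1 + TD * l * coefU N K j)^2 + 1) * coefV l c TD N K j)"
      by (simp add: coefB_def)
  qed
  finally show ?thesis .
qed

theorem proposition3:
  fixes M :: "'a measure" and T :: "nat \<Rightarrow> 'a \<Rightarrow> real"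
    and N K n :: nat and lam c TD :: real
  assumes "prob_space M"
    and "N \<ge> 1" and "1 \<le> K" and "K \<le> N"
    and "lam > 0" and "c > 0" and "TD > c"
    and "\<And>i. i \<in> {1..N} \<Longrightarrow> T i \<in> borel_measurable M"
    and "prob_space.indep_vars M (\<lambda>_. borel) T {1..N}"
    and "\<And>i t. i \<in> {1..N} \<Longrightarrow> cdf (distr M borel (T i)) t = shexp_cdf lam c t"
    and "n \<in> {1..N}"
    and CS_def: "CS = {w \<in> space M. kth_smallest N K T w < TD \<and>
                         T n w \<le> min TD (kth_smallest N K T w)}"
    and CF_def: "CF = {w \<in> space M. kth_smallest N K T w < TD \<and>
                         T n w > min TD (kth_smallest N K T w)}"
    and "measure M CS > 0" and "measure M CF > 0"
  shows "cond_exp_event M (kth_smallest N K T) CS = cond_exp_event M (kth_smallest N K T) CF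
    \<and> cond_exp_event M (\<lambda>w. (kth_smallest N K T w)^2) CS
        = cond_exp_event M (\<lambda>w. (kth_smallest N K T w)^2) CF
    \<and> cond_exp_event M (kth_smallest N K T) CS
        = 1 / (1 - coefZ lam c TD N K) *
          (\<Sum>j<K. coefB N K j / (lam * (coefU N K j)^2) *
             (1 + c * lam * coefU N K j
              - (1 + TD * lam * coefU N K j) * coefV lam c TD N K j))
    \<and> cond_exp_event M (\<lambda>w. (kth_smallest N K T w)^2) CS
        = 1 / (1 - coefZ lam c TD N K) *
          (\<Sum>j<K. coefB N K j / (lam^2 * (coefU N K j)^3) *
             ((1 + c * lam * coefU N K j)^2 + 1
              - ((1 + TD * lam * coefU N K j)^2 + 1) * coefV lam c TD N K j))"
proof -
  interpret M: prob_space M by fact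
  define I where "I = {1..N}"
  define D where "D = Dm lam c"
  define P where "P = PiM I (\<lambda>_. D)"
  define kt where "kt = (\<lambda>x::nat\<Rightarrow>real. kth_smallest N K (\<lambda>i x. x i) x)"
  define Tv where "Tv = (\<lambda>w. \<lambda>i\<in>I. T i w)"
  have finI: "finite I" and cardI: "card I = N" and nI: "n \<in> I" and Ine: "I \<noteq> {}"
    using assms(2,11) by (auto simp: I_def)
  have Dprob: "prob_space D" and sD: "sets D = sets borel" and spD: "space D = UNIV"
    unfolding D_def using assms(5) by (auto simp: Dm_prob Dm_sets Dm_space)
  have ktT: "kth_smallest N K T w = kt (Tv w)" for w
    unfolding kt_def Tv_def kth_smallest_def I_def
    by (intro arg_cong[where f="\<lambda>xs. sort xs ! (K - 1)"] map_cong) auto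
  have TvM: "Tv \<in> measurable M (PiM I (\<lambda>_. borel))"
    unfolding Tv_def using assms(8) by (intro measurable_restrict) (auto simp: I_def)
  have distrP: "distr M (PiM I (\<lambda>_. borel)) Tv = P"
  proof -
    have "distr M (PiM I (\<lambda>_. borel)) Tv = PiM I (\<lambda>i. distr M borel (T i))"
      unfolding Tv_def using M.indep_vars_iff_distr_eq_PiM'[where I=I and M'="\<lambda>_. borel" and X=T] Ine assms(8,9)
      by (auto simp: I_def)
    also have "\<dots> = P" unfolding P_def
    proof (rule PiM_cong[OF refl])
      fix i assume i: "i \<in> I"
      show "distr M borel (T i) = D"
      proof (rule cdf_unique)
        show "real_distribution (distr M borel (T i))"
          using assms(8) i by (intro M.real_distribution_distr) (auto simp: I_def)
        show "real_distribution D"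
          using Dprob sD by (intro real_distribution.intro real_distribution_axioms.intro)
        show "cdf (distr M borel (T i)) = cdf D"
          using assms(10) i assms(5) by (auto simp: D_def Dm_cdf I_def)
      qed
    qed
    finally show ?thesis .
  qed
  have setsP: "sets P = sets (PiM I (\<lambda>_. borel))"
    unfolding P_def by (intro sets_PiM_cong) (auto simp: sD)
  have card_sum: "real (card {i\<in>I. x i \<le> a}) = (\<Sum>i\<in>I. if x i \<le> a then 1 else 0)" for x :: "nat \<Rightarrow> real" and a
    using finI by (simp add: sum.If_cases Int_def conj_commute)
  have kt_meas[measurable]: "kt \<in> borel_measurable (PiM I (\<lambda>_. borel))"
  proof (subst borel_measurable_iff_le, intro allI)
    fix a
    have "{x \<in> space (PiM I (\<lambda>_. borel)). kt x \<le> a}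
        = {x \<in> space (PiM I (\<lambda>_. borel)). real K \<le> (\<Sum>i\<in>I. if x i \<le> a then 1 else 0)}"
    proof -
      have "kt x \<le> a \<longleftrightarrow> real K \<le> (\<Sum>i\<in>I. if x i \<le> a then 1 else 0)" for x
        unfolding kt_def card_sum[symmetric]
        using kth_le[OF assms(3,4), where T="\<lambda>i x. x i" and w=x and t=a] by (simp add: I_def)
      then show ?thesis by auto
    qed
    also have "\<dots> \<in> sets (PiM I (\<lambda>_. borel))"
      by measurable
    finally show "{x \<in> space (PiM I (\<lambda>_. borel)). kt x \<le> a} \<in> sets (PiM I (\<lambda>_. borel))" .
  qed
  have compn[measurable]: "(\<lambda>x. x n) \<in> borel_measurable (PiM I (\<lambda>_. borel))"
    using nI by (rule measurable_component_singleton)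
  have kt_measP: "kt \<in> borel_measurable P"
    unfolding measurable_cong_sets[OF setsP refl] by (rule kt_meas)
  have kt_in: "\<exists>m\<in>I. kt x = x m" for x :: "nat \<Rightarrow> real"
    unfolding kt_def I_def using kth_in[OF assms(3,4), where T="\<lambda>i x. x i" and w=x] by simp
  have AEc: "AE x in P. \<forall>i\<in>I. c < x i"
  proof (rule AE_finite_allI[OF finI])
    fix i assume i: "i \<in> I"
    show "AE x in P. c < x i" unfolding P_def
      using Dprob i Dm_AE[OF assms(5), of c, folded D_def] sD spD
      by (intro AE_component) auto
  qed
  have AEinj: "AE x in P. inj_on x I"
  proof -
    have "AE x in P. \<forall>i\<in>I. \<forall>j\<in>I. i \<noteq> j \<longrightarrow> x i \<noteq> x j"
    proof (intro AE_finite_allI[OF finI])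
      fix i j assume i: "i \<in> I" and j: "j \<in> I"
      show "AE x in P. i \<noteq> j \<longrightarrow> x i \<noteq> x j"
      proof (cases "i = j")
        case False
        have "AE x in P. x i \<noteq> x j" unfolding P_def
          using Dprob sD finI i j False Dm_single[OF assms(5), of c, folded D_def]
          by (intro AE_neq) auto
        then show ?thesis by eventually_elim simp
      qed simp
    qed
    then show ?thesis by eventually_elim (auto simp: inj_on_def)
  qed
  define SS where "SS b m = {S. S \<subseteq> I - {m} \<and> card S = K - 1 \<and> (if b then (n \<noteq> m \<longrightarrow> n \<in> S) else (n \<noteq> m \<and> n \<notin> S))}" for b m
  define Ev where "Ev b x = (kt x < TD \<and> (if b then x n \<le> min TD (kt x) else min TD (kt x) < x n))" for b x
  define h where "h b p x = (if Ev b x then kt x ^ p else 0)" for b p x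
  define G where "G p t = ennreal (t ^ p) * indicator {..<TD} t" for p t
  define Jr where "Jr p = (LINT s|lborel. indicator {0..TD - c} s * Hf lam c N K p s)" for p
  define \<alpha> where "\<alpha> b = (\<Sum>m\<in>I. card (SS b m))" for b
  have h_meas: "h b p \<in> borel_measurable (PiM I (\<lambda>_. borel))" for b p
  proof -
    have [measurable]: "(\<lambda>x. min TD (kt x)) \<in> borel_measurable (PiM I (\<lambda>_. borel))" by measurable
    have mn: "(\<lambda>x. min TD (kt x)) \<in> borel_measurable (PiM I (\<lambda>_. borel))" by measurable
    have [measurable]: "Measurable.pred (PiM I (\<lambda>_. borel)) (\<lambda>x. x n \<le> min TD (kt x))"
      unfolding pred_def by (rule borel_measurable_le[OF compn mn])
    have [measurable]: "Measurable.pred (PiM I (\<lambda>_. borel)) (\<lambda>x. min TD (kt x) < x n)"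
      unfolding pred_def by (rule borel_measurable_less[OF mn compn])
    show ?thesis unfolding h_def Ev_def by (cases b) (simp only: if_True if_False, measurable)+
  qed
  have h_measP: "h b p \<in> borel_measurable P" for b p
    unfolding measurable_cong_sets[OF setsP refl] by (rule h_meas)
  have G_meas: "G p \<in> borel_measurable borel" for p
    unfolding G_def by measurable
  have SS_sub: "SS b m \<subseteq> Pow (I - {m})" for b m unfolding SS_def by auto
  have pointwise: "ennreal (h b p x) = (\<Sum>m\<in>I. G p (x m) * (\<Sum>S\<in>SS b m. \<Prod>i\<in>I-{m}. chi S i (x i) (x m)))"
    if inj: "inj_on x I" for b p x
  proof -
    obtain m0 where m0: "m0 \<in> I" "kt x = x m0" using kt_in by blast
    have keq: "kt x = x m \<longleftrightarrow> card {i\<in>I. x i < x m} = K - 1" if "m \<in> I" for m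
      unfolding kt_def I_def
      using kth_eq_iff[OF assms(3,4), where T="\<lambda>i x. x i" and w=x and m=m] inj that by (simp add: I_def)
    have Seq: "{i\<in>I-{m}. x i < x m} = {i\<in>I. x i < x m}" for m by auto
    have inner: "(\<Sum>S\<in>SS b m. \<Prod>i\<in>I-{m}. chi S i (x i) (x m)) = (if {i\<in>I-{m}. x i < x m} \<in> SS b m then 1 else 0)" for m
      using finI SS_sub by (intro sum_prod_chi) auto
    have others: "{i\<in>I-{m}. x i < x m} \<notin> SS b m" if "m \<in> I" "m \<noteq> m0" for m
    proof
      assume "{i\<in>I-{m}. x i < x m} \<in> SS b m"
      then have "card {i\<in>I. x i < x m} = K - 1" unfolding SS_def Seq by auto
      then have "x m0 = x m" using keq[OF that(1)] m0 by simp
      then show False using inj m0 that unfolding inj_on_def by blast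
    qed
    have at_m0: "({i\<in>I-{m0}. x i < x m0} \<in> SS b m0) \<longleftrightarrow> (if b then x n \<le> x m0 else x m0 < x n)"
    proof -
      have cardK: "card {i\<in>I-{m0}. x i < x m0} = K - 1" using keq[OF m0(1)] m0 Seq by simp
      have neq: "n \<noteq> m0 \<Longrightarrow> x n \<noteq> x m0" using inj nI m0 unfolding inj_on_def by blast
      show ?thesis unfolding SS_def using cardK neq nI by (cases "n = m0") auto
    qed
    have "(\<Sum>m\<in>I. G p (x m) * (\<Sum>S\<in>SS b m. \<Prod>i\<in>I-{m}. chi S i (x i) (x m)))
        = G p (x m0) * (\<Sum>S\<in>SS b m0. \<Prod>i\<in>I-{m0}. chi S i (x i) (x m0))
          + (\<Sum>m\<in>I-{m0}. G p (x m) * (\<Sum>S\<in>SS b m. \<Prod>i\<in>I-{m}. chi S i (x i) (x m)))"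
      using finI m0 by (subst sum.remove) auto
    also have "(\<Sum>m\<in>I-{m0}. G p (x m) * (\<Sum>S\<in>SS b m. \<Prod>i\<in>I-{m}. chi S i (x i) (x m))) = 0"
      using others by (intro sum.neutral) (auto simp: inner)
    also have "G p (x m0) * (\<Sum>S\<in>SS b m0. \<Prod>i\<in>I-{m0}. chi S i (x i) (x m0))
        = G p (x m0) * (if (if b then x n \<le> x m0 else x m0 < x n) then 1 else 0)"
      by (simp only: inner at_m0)
    also have "\<dots> = ennreal (h b p x)"
      unfolding G_def h_def Ev_def m0(2) by (cases b) (auto simp: indicator_def min_def)
    finally show ?thesis by simp
  qed
  have Jeq: "(\<integral>\<^sup>+t. G p t * emeasure D {..<t} ^ (K - 1) * emeasure D {t..} ^ (card I - 1 - (K - 1)) \<partial>D)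
      = ennreal (Jr p)" and Jr_nn: "Jr p \<ge> 0" for p
  proof -
    have "card I - 1 - (K - 1) = N - K" using cardI assms(3,4) by simp
    then show "(\<integral>\<^sup>+t. G p t * emeasure D {..<t} ^ (K - 1) * emeasure D {t..} ^ (card I - 1 - (K - 1)) \<partial>D)
      = ennreal (Jr p)"
      unfolding G_def D_def Jr_def using J_eq(1)[OF assms(5,6,7), of p K N] by simp
    show "Jr p \<ge> 0" unfolding Jr_def using J_eq(2)[OF assms(5,6,7), of N K p] .
  qed
  have main_int: "integral\<^sup>L P (h b p) = real (\<alpha> b) * Jr p" for b p
  proof -
    have nonneg: "AE x in P. 0 \<le> h b p x"
      using AEc
    proof eventually_elim
      case (elim x)
      obtain m where "m \<in> I" "kt x = x m" using kt_in by blast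
      then have "kt x > 0" using elim assms(6) by force
      then show ?case unfolding h_def by simp
    qed
    have "(\<integral>\<^sup>+x. ennreal (h b p x) \<partial>P)
        = (\<integral>\<^sup>+x. (\<Sum>m\<in>I. G p (x m) * (\<Sum>S\<in>SS b m. \<Prod>i\<in>I-{m}. chi S i (x i) (x m))) \<partial>P)"
      using AEinj by (intro nn_integral_cong_AE) (auto elim!: eventually_mono simp: pointwise)
    also have "\<dots> = (\<Sum>m\<in>I. \<integral>\<^sup>+x. G p (x m) * (\<Sum>S\<in>SS b m. \<Prod>i\<in>I-{m}. chi S i (x i) (x m)) \<partial>P)"
    proof (rule nn_integral_sum)
      fix m assume m: "m \<in> I"
      have GD: "G p \<in> borel_measurable D" unfolding measurable_cong_sets[OF sD refl] by (rule G_meas)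
      have "(\<lambda>x. \<Sum>S\<in>SS b m. G p (x m) * (\<Prod>i\<in>I-{m}. chi S i (x i) (x m))) \<in> borel_measurable P"
        unfolding P_def by (intro borel_measurable_sum core_meas[OF m GD chi_meas[OF sD]])
      then show "(\<lambda>x. G p (x m) * (\<Sum>S\<in>SS b m. \<Prod>i\<in>I-{m}. chi S i (x i) (x m))) \<in> borel_measurable P"
        by (simp add: sum_distrib_left)
    qed
    also have "\<dots> = (\<Sum>m\<in>I. of_nat (card (SS b m)) * ennreal (Jr p))"
    proof (rule sum.cong[OF refl])
      fix m assume m: "m \<in> I"
      have "(\<integral>\<^sup>+x. G p (x m) * (\<Sum>S\<in>SS b m. \<Prod>i\<in>I-{m}. chi S i (x i) (x m)) \<partial>P)
          = of_nat (card (SS b m)) * (\<integral>\<^sup>+t. G p t * emeasure D {..<t} ^ (K - 1) * emeasure D {t..} ^ (card I - 1 - (K - 1)) \<partial>D)"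
        unfolding P_def
        by (rule term_integral[OF Dprob sD finI m G_meas SS_sub]) (auto simp: SS_def)
      then show "(\<integral>\<^sup>+x. G p (x m) * (\<Sum>S\<in>SS b m. \<Prod>i\<in>I-{m}. chi S i (x i) (x m)) \<partial>P)
          = of_nat (card (SS b m)) * ennreal (Jr p)" by (simp only: Jeq)
    qed
    also have "\<dots> = ennreal (real (\<alpha> b) * Jr p)"
      using Jr_nn[of p] by (simp add: \<alpha>_def sum_distrib_right[symmetric] ennreal_of_nat_eq_real_of_nat)
        (simp add: ennreal_mult'' sum_nonneg)
    finally have "(\<integral>\<^sup>+x. ennreal (h b p x) \<partial>P) = ennreal (real (\<alpha> b) * Jr p)" .
    then show ?thesis
      using integral_eq_nn_integral[OF h_measP nonneg] Jr_nn[of p] by simp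
  qed
  have transfer: "(LINT w|M. h b p (Tv w)) = real (\<alpha> b) * Jr p" for b p
    using integral_distr[OF TvM h_meas, of b p] distrP main_int by simp
  define E where "E b = (if b then CS else CF)" for b
  have Eeq: "E b = {w \<in> space M. Ev b (Tv w)}" for b
  proof -
    have "Tv w n = T n w" for w unfolding Tv_def using nI by simp
    then show ?thesis unfolding E_def Ev_def CS_def CF_def ktT by (cases b) auto
  qed
  have ind: "indicator (E b) w = (if Ev b (Tv w) then 1 else 0 :: real)" if "w \<in> space M" for b w
    using that Eeq by (auto simp: indicator_def)
  have mE: "measure M (E b) = real (\<alpha> b) * Jr 0" for b
  proof -
    have "measure M (E b) = (LINT w|M. indicator (E b) w)"
      using Eeq by (simp add: Int_absorb2)
    also have "\<dots> = (LINT w|M. h b 0 (Tv w))"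
      by (intro Bochner_Integration.integral_cong refl) (simp add: ind h_def)
    finally show ?thesis using transfer by simp
  qed
  have iE1: "set_lebesgue_integral M (E b) (kth_smallest N K T) = real (\<alpha> b) * Jr 1" for b
  proof -
    have "set_lebesgue_integral M (E b) (kth_smallest N K T) = (LINT w|M. h b 1 (Tv w))"
      unfolding set_lebesgue_integral_def
      by (intro Bochner_Integration.integral_cong refl) (simp add: ind h_def ktT)
    then show ?thesis using transfer by simp
  qed
  have iE2: "set_lebesgue_integral M (E b) (\<lambda>w. (kth_smallest N K T w)^2) = real (\<alpha> b) * Jr 2" for b
  proof -
    have "set_lebesgue_integral M (E b) (\<lambda>w. (kth_smallest N K T w)^2) = (LINT w|M. h b 2 (Tv w))"
      unfolding set_lebesgue_integral_def
      by (intro Bochner_Integration.integral_cong refl) (simp add: ind h_def ktT)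
    then show ?thesis using transfer by simp
  qed
  have pos: "real (\<alpha> b) * Jr 0 > 0" for b
  proof (cases b)
    case True then show ?thesis using mE[of True] assms(14) by (simp add: E_def)
  next
    case False then show ?thesis using mE[of False] assms(15) by (simp add: E_def)
  qed
  have ne: "real (\<alpha> b) \<noteq> 0" "Jr 0 \<noteq> 0" for b
    using pos[of b] by (metis less_irrefl mult_zero_left mult_zero_right)+
  have c1: "cond_exp_event M (kth_smallest N K T) (E b) = Jr 1 / Jr 0" for b
    unfolding cond_exp_event_def iE1 mE using ne(1)[of b] by simp
  have c2: "cond_exp_event M (\<lambda>w. (kth_smallest N K T w)^2) (E b) = Jr 2 / Jr 0" for b
    unfolding cond_exp_event_def iE2 mE using ne(1)[of b] by simp
  define \<kappa> where "\<kappa> = real K * real (N choose K)"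
  have kpos: "\<kappa> \<noteq> 0" unfolding \<kappa>_def using assms(3,4) by simp
  have k0: "\<kappa> * Jr 0 = 1 - coefZ lam c TD N K"
    unfolding \<kappa>_def Jr_def by (rule Jr0[OF assms(3,4,5,7)])
  have k1: "\<kappa> * Jr 1 = (\<Sum>j<K. coefB N K j / (lam * (coefU N K j)^2) *
             (1 + c * lam * coefU N K j - (1 + TD * lam * coefU N K j) * coefV lam c TD N K j))"
    unfolding \<kappa>_def Jr_def by (rule Jr1[OF assms(3,4,5,7)])
  have k2: "\<kappa> * Jr 2 = (\<Sum>j<K. coefB N K j / (lam^2 * (coefU N K j)^3) *
             ((1 + c * lam * coefU N K j)^2 + 1
              - ((1 + TD * lam * coefU N K j)^2 + 1) * coefV lam c TD N K j))"
    unfolding \<kappa>_def Jr_def by (rule Jr2[OF assms(3,4,5,7)])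
  have r: "Jr q / Jr 0 = 1 / (\<kappa> * Jr 0) * (\<kappa> * Jr q)" for q
    using kpos ne(2) by (simp add: field_simps)
  have f1: "Jr 1 / Jr 0 = 1 / (1 - coefZ lam c TD N K) * (\<Sum>j<K. coefB N K j / (lam * (coefU N K j)^2) *
             (1 + c * lam * coefU N K j - (1 + TD * lam * coefU N K j) * coefV lam c TD N K j))"
    unfolding r[of 1] k0 k1 by (rule refl)
  have f2: "Jr 2 / Jr 0 = 1 / (1 - coefZ lam c TD N K) * (\<Sum>j<K. coefB N K j / (lam^2 * (coefU N K j)^3) *
             ((1 + c * lam * coefU N K j)^2 + 1
              - ((1 + TD * lam * coefU N K j)^2 + 1) * coefV lam c TD N K j))"
    unfolding r[of 2] k0 k2 by (rule refl)
  have CS: "CS = E True" and CF: "CF = E False" by (simp_all add: E_def)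
  show ?thesis
    unfolding CS CF c1 c2 f1 f2 by (intro conjI refl)
qed

end
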